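(* Let $R \xrightarrow{\tau} A \xrightarrow{\lambda} C \xrightarrow{g_C} B$ be ring morphisms and put $g := g_C\circ\lambda : A \to B$. Regard $C$ as an $R$-algebra via $\lambda\circ\tau$. Then $A^*_{B,R} \subseteq C^*_{B,R}$, where $A^*_{B,R}$ is the Lipschitz saturation of $A$ in $B$ relative to $R \xrightarrow{\tau} A \xrightarrow{g} B$ and $C^*_{B,R}$ is the Lipschitz saturation of $C$ in $B$ relative to $R \xrightarrow{\lambda\circ\tau} C \xrightarrow{g_C} B$.
   Context: All rings are commutative with identity. For a sequence of ring morphisms $R \to A' \xrightarrow{h} B$, let $\varphi: B\otimes_R B \to B \otimes_{A'} B$ be the canonical $R$-algebra morphism $x\otimes_R y \mapsto x \otimes_{A'} y$, and let $\Delta: B \to B\otimes_R B$, $\Delta(b) = b\otimes_R 1 - 1 \otimes_R b$. The Lipschitz saturation of $A'$ in $B$ relative to $R\to A'\to B$ is $(A')^*_{B,R} := \{x \in B \mid \Delta(x) \in \overline{\ker\varphi}\}$, where for an ideal $I$ of a ring $S$, $\overline{I}$ denotes the integral closure of $I$: the set of $u\in S$ satisfying $u^n + a_1u^{n-1}+\cdots+a_n = 0$ for some $n\ge 1$ and $a_i \in I^i$. *)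

theory Defs
  imports "HOL-Algebra.Algebra"
begin

text \<open>The free abelian group (= monoid ring over the integers) on the set
  carrier B \<times> carrier B, with multiplication (b1,b2)(c1,c2) = (b1 c1, b2 c2)
  extended bilinearly.\<close>

definition fsupp :: "('x \<Rightarrow> int) \<Rightarrow> 'x set" where
  "fsupp f = {p. f p \<noteq> 0}"

definition ind :: "'x \<Rightarrow> 'x \<Rightarrow> int" where
  "ind p = (\<lambda>q. if q = p then 1 else 0)"

definition free_pair_ring :: "('b, 'm) ring_scheme \<Rightarrow> ('b \<times> 'b \<Rightarrow> int) ring" where
  "free_pair_ring B =
     \<lparr> carrier = {f. finite (fsupp f) \<and> fsupp f \<subseteq> carrier B \<times> carrier B},
       monoid.mult = (\<lambda>f g p. \<Sum>q\<in>fsupp f. \<Sum>r\<in>fsupp g.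
                 (if (fst q \<otimes>\<^bsub>B\<^esub> fst r, snd q \<otimes>\<^bsub>B\<^esub> snd r) = p then f q * g r else 0)),
       monoid.one = ind (\<one>\<^bsub>B\<^esub>, \<one>\<^bsub>B\<^esub>),
       ring.zero = (\<lambda>_. 0),
       ring.add = (\<lambda>f g p. f p + g p) \<rparr>"

text \<open>Generators of the kernel of the free group onto B \<otimes>_S B, where
  B is an S-algebra through f : S \<rightarrow> B (bilinearity and S-balancedness).\<close>

definition tensor_rels :: "('s, 'n) ring_scheme \<Rightarrow> ('b, 'm) ring_scheme \<Rightarrow> ('s \<Rightarrow> 'b)
                             \<Rightarrow> ('b \<times> 'b \<Rightarrow> int) set" where
  "tensor_rels S B f =
     {(\<lambda>p. ind (x \<oplus>\<^bsub>B\<^esub> x', y) p - ind (x, y) p - ind (x', y) p) | x x' y.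
         x \<in> carrier B \<and> x' \<in> carrier B \<and> y \<in> carrier B}
   \<union> {(\<lambda>p. ind (x, y \<oplus>\<^bsub>B\<^esub> y') p - ind (x, y) p - ind (x, y') p) | x y y'.
         x \<in> carrier B \<and> y \<in> carrier B \<and> y' \<in> carrier B}
   \<union> {(\<lambda>p. ind (f s \<otimes>\<^bsub>B\<^esub> x, y) p - ind (x, f s \<otimes>\<^bsub>B\<^esub> y) p) | s x y.
         s \<in> carrier S \<and> x \<in> carrier B \<and> y \<in> carrier B}"

definition tensor_ker :: "('s, 'n) ring_scheme \<Rightarrow> ('b, 'm) ring_scheme \<Rightarrow> ('s \<Rightarrow> 'b)
                            \<Rightarrow> ('b \<times> 'b \<Rightarrow> int) set" where
  "tensor_ker S B f = genideal (free_pair_ring B) (tensor_rels S B f)"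

definition tensor_ring :: "('s, 'n) ring_scheme \<Rightarrow> ('b, 'm) ring_scheme \<Rightarrow> ('s \<Rightarrow> 'b)
                             \<Rightarrow> ('b \<times> 'b \<Rightarrow> int) set ring" where
  "tensor_ring S B f = free_pair_ring B Quot tensor_ker S B f"

definition tens :: "('s, 'n) ring_scheme \<Rightarrow> ('b, 'm) ring_scheme \<Rightarrow> ('s \<Rightarrow> 'b)
                      \<Rightarrow> 'b \<Rightarrow> 'b \<Rightarrow> ('b \<times> 'b \<Rightarrow> int) set" where
  "tens S B f x y = a_r_coset (free_pair_ring B) (tensor_ker S B f) (ind (x, y))"

definition tdelta :: "('s, 'n) ring_scheme \<Rightarrow> ('b, 'm) ring_scheme \<Rightarrow> ('s \<Rightarrow> 'b)
                        \<Rightarrow> 'b \<Rightarrow> ('b \<times> 'b \<Rightarrow> int) set" where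
  "tdelta S B f b = tens S B f b \<one>\<^bsub>B\<^esub> \<ominus>\<^bsub>tensor_ring S B f\<^esub> tens S B f \<one>\<^bsub>B\<^esub> b"

text \<open>The canonical map B \<otimes>_R B \<rightarrow> B \<otimes>_A' B (x \<otimes>_R y \<mapsto> x \<otimes>_A' y),
  with R \<rightarrow> B given by fR and A' \<rightarrow> B given by fA: it sends the class of
  a representative u to the class of u.\<close>
definition tensor_can :: "('s, 'n) ring_scheme \<Rightarrow> ('t, 'k) ring_scheme \<Rightarrow> ('b, 'm) ring_scheme
     \<Rightarrow> ('s \<Rightarrow> 'b) \<Rightarrow> ('t \<Rightarrow> 'b) \<Rightarrow> ('b \<times> 'b \<Rightarrow> int) set \<Rightarrow> ('b \<times> 'b \<Rightarrow> int) set" where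
  "tensor_can R A B fR fA Z = {v. \<exists>u\<in>Z. v \<in> a_r_coset (free_pair_ring B) (tensor_ker A B fA) u}"

fun ideal_pow :: "('a, 'm) ring_scheme \<Rightarrow> 'a set \<Rightarrow> nat \<Rightarrow> 'a set" where
  "ideal_pow S I 0 = carrier S"
| "ideal_pow S I (Suc n) = ideal_prod S I (ideal_pow S I n)"

definition int_closure :: "('a, 'm) ring_scheme \<Rightarrow> 'a set \<Rightarrow> 'a set" where
  "int_closure S I = {u \<in> carrier S. \<exists>n a. n \<ge> 1 \<and> (\<forall>i\<in>{1..n}. a i \<in> ideal_pow S I i) \<and>
      u [^]\<^bsub>S\<^esub> n \<oplus>\<^bsub>S\<^esub> (\<Oplus>\<^bsub>S\<^esub> i\<in>{1..n}. a i \<otimes>\<^bsub>S\<^esub> u [^]\<^bsub>S\<^esub> (n - i)) = \<zero>\<^bsub>S\<^esub>}"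

definition lip_sat :: "('r, 'n) ring_scheme \<Rightarrow> ('a, 'k) ring_scheme \<Rightarrow> ('b, 'm) ring_scheme
     \<Rightarrow> ('r \<Rightarrow> 'a) \<Rightarrow> ('a \<Rightarrow> 'b) \<Rightarrow> 'b set" where
  "lip_sat R A B tau h =
     (let T = tensor_ring R B (h \<circ> tau);
          K = {Z \<in> carrier T. tensor_can R A B (h \<circ> tau) h Z = \<zero>\<^bsub>tensor_ring A B h\<^esub>}
      in {x \<in> carrier B. tdelta R B (h \<circ> tau) x \<in> int_closure T K})"

end

theory Submission
  imports Defs
begin

lemma ideal_prod_mono:
  assumes "I \<subseteq> I'" "J \<subseteq> J'"
  shows "ideal_prod S I J \<subseteq> ideal_prod S I' J'"
proof
  fix x assume "x \<in> ideal_prod S I J"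
  then show "x \<in> ideal_prod S I' J'"
  proof induct
    case (prod i j)
    then show ?case using assms by (blast intro: ideal_prod.prod)
  next
    case (sum s1 s2)
    then show ?case by (blast intro: ideal_prod.sum)
  qed
qed

lemma ideal_pow_mono:
  assumes "I \<subseteq> I'" shows "ideal_pow S I n \<subseteq> ideal_pow S I' n"
proof (induct n)
  case 0
  then show ?case by simp
next
  case (Suc n)
  then show ?case using ideal_prod_mono[OF assms Suc] by simp
qed

lemma int_closure_mono:
  assumes "I \<subseteq> I'" shows "int_closure S I \<subseteq> int_closure S I'"
  unfolding int_closure_def
  using ideal_pow_mono[OF assms] by blast

lemma genideal_mono:
  fixes G :: "('a, 'm) ring_scheme" assumes "Xs \<subseteq> Ys" shows "genideal G Xs \<subseteq> genideal G Ys"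
  unfolding genideal_def using assms by blast

lemma fpr_add: "x \<oplus>\<^bsub>free_pair_ring B\<^esub> y = (\<lambda>p. x p + y p)"
  by (simp add: free_pair_ring_def)

lemma fpr_zero: "\<zero>\<^bsub>free_pair_ring B\<^esub> = (\<lambda>_. 0)"
  by (simp add: free_pair_ring_def)

lemma gen_zero: "(\<lambda>_. 0) \<in> genideal (free_pair_ring B) Xs"
  unfolding genideal_def
proof safe
  fix J assume "ideal J (free_pair_ring B)"
  then have as: "additive_subgroup J (free_pair_ring B)" by (simp add: ideal_def)
  have "\<zero>\<^bsub>free_pair_ring B\<^esub> \<in> J" by (rule additive_subgroup.zero_closed[OF as])
  then show "(\<lambda>_. 0) \<in> J" by (simp only: fpr_zero)
qed

lemma gen_add:
  assumes "x \<in> genideal (free_pair_ring B) Xs" "y \<in> genideal (free_pair_ring B) Xs"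
  shows "(\<lambda>p. x p + y p) \<in> genideal (free_pair_ring B) Xs"
  using assms unfolding genideal_def
proof safe
  fix J assume "ideal J (free_pair_ring B)" "Xs \<subseteq> J"
    and x: "x \<in> \<Inter> {I. ideal I (free_pair_ring B) \<and> Xs \<subseteq> I}"
    and y: "y \<in> \<Inter> {I. ideal I (free_pair_ring B) \<and> Xs \<subseteq> I}"
  then have "x \<in> J" "y \<in> J" by auto
  from \<open>ideal J (free_pair_ring B)\<close> have as: "additive_subgroup J (free_pair_ring B)" by (simp add: ideal_def)
  have "x \<oplus>\<^bsub>free_pair_ring B\<^esub> y \<in> J" by (rule additive_subgroup.a_closed[OF as \<open>x \<in> J\<close> \<open>y \<in> J\<close>])
  then show "(\<lambda>p. x p + y p) \<in> J" by (simp only: fpr_add)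
qed

lemma gen_diff:
  assumes "x \<in> genideal (free_pair_ring B) Xs" "y \<in> genideal (free_pair_ring B) Xs"
  shows "(\<lambda>p. x p - y p) \<in> genideal (free_pair_ring B) Xs"
  using assms unfolding genideal_def
proof safe
  fix J assume "ideal J (free_pair_ring B)" "Xs \<subseteq> J"
    and x: "x \<in> \<Inter> {I. ideal I (free_pair_ring B) \<and> Xs \<subseteq> I}"
    and y: "y \<in> \<Inter> {I. ideal I (free_pair_ring B) \<and> Xs \<subseteq> I}"
  then have xJ: "x \<in> J" and yJ: "y \<in> J" by auto
  from \<open>ideal J (free_pair_ring B)\<close> interpret ideal J "free_pair_ring B" .
  have yc: "y \<in> carrier (free_pair_ring B)" using yJ I_l_closed
    by (metis a_subset subsetD)
  have "y \<oplus>\<^bsub>free_pair_ring B\<^esub> \<ominus>\<^bsub>free_pair_ring B\<^esub> y = \<zero>\<^bsub>free_pair_ring B\<^esub>"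
    using yc by (rule r_neg)
  then have h0: "(\<lambda>p. y p + (\<ominus>\<^bsub>free_pair_ring B\<^esub> y) p) = (\<lambda>_. 0)"
    by (simp only: fpr_add fpr_zero)
  have neg: "\<ominus>\<^bsub>free_pair_ring B\<^esub> y = (\<lambda>p. - y p)"
  proof (rule ext)
    fix p
    have "y p + (\<ominus>\<^bsub>free_pair_ring B\<^esub> y) p = 0" using fun_cong[OF h0, of p] by simp
    then show "(\<ominus>\<^bsub>free_pair_ring B\<^esub> y) p = - y p" by linarith
  qed
  have as: "additive_subgroup J (free_pair_ring B)" by (rule is_additive_subgroup)
  have "\<ominus>\<^bsub>free_pair_ring B\<^esub> y \<in> J" using yJ by (rule additive_subgroup.a_inv_closed[OF as])
  then have "x \<oplus>\<^bsub>free_pair_ring B\<^esub> \<ominus>\<^bsub>free_pair_ring B\<^esub> y \<in> J" using xJ additive_subgroup.a_closed[OF as] by blast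
  moreover have "x \<oplus>\<^bsub>free_pair_ring B\<^esub> \<ominus>\<^bsub>free_pair_ring B\<^esub> y = (\<lambda>p. x p - y p)"
    unfolding neg fpr_add by simp
  ultimately show "(\<lambda>p. x p - y p) \<in> J" by (simp only:)
qed

lemma rels_mono:
  assumes "lam \<in> ring_hom A C"
  shows "tensor_rels A B (gC \<circ> lam) \<subseteq> tensor_rels C B gC"
proof -
  have "\<And>s. s \<in> carrier A \<Longrightarrow> lam s \<in> carrier C" using assms by (simp add: ring_hom_def Pi_def)
  then show ?thesis unfolding tensor_rels_def o_apply
    by (intro Un_mono subset_refl) blast
qed

lemma ker_mono:
  assumes "lam \<in> ring_hom A C"
  shows "tensor_ker A B (gC \<circ> lam) \<subseteq> tensor_ker C B gC"
  unfolding tensor_ker_def by (rule genideal_mono[OF rels_mono[OF assms]])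

lemma coset_self:
  assumes "I = tensor_ker A B h"
  shows "u \<in> a_r_coset (free_pair_ring B) I u"
proof -
  have "(\<lambda>_. 0) \<in> I" using gen_zero assms unfolding tensor_ker_def by blast
  moreover have "(\<lambda>_. 0) \<oplus>\<^bsub>free_pair_ring B\<^esub> u = u" by (simp add: fpr_add)
  ultimately show ?thesis unfolding a_r_coset_def' by blast
qed

theorem mainTheorem2:
  fixes R :: "('r, 'n) ring_scheme" and A :: "('a, 'k) ring_scheme"
    and C :: "('c, 'l) ring_scheme" and B :: "('b, 'm) ring_scheme"
    and tau :: "'r \<Rightarrow> 'a" and lam :: "'a \<Rightarrow> 'c" and gC :: "'c \<Rightarrow> 'b"
  assumes "cring R" and "cring A" and "cring C" and "cring B"
    and "tau \<in> ring_hom R A" and "lam \<in> ring_hom A C" and "gC \<in> ring_hom C B"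
  shows "lip_sat R A B tau (gC \<circ> lam) \<subseteq> lip_sat R C B (lam \<circ> tau) gC"
proof -
  let ?T = "tensor_ring R B (gC \<circ> lam \<circ> tau)"
  let ?KA = "tensor_ker A B (gC \<circ> lam)"
  let ?KC = "tensor_ker C B gC"
  have sub: "?KA \<subseteq> ?KC" by (rule ker_mono[OF assms(6)])
  have KK: "{Z \<in> carrier ?T. tensor_can R A B (gC \<circ> lam \<circ> tau) (gC \<circ> lam) Z = \<zero>\<^bsub>tensor_ring A B (gC \<circ> lam)\<^esub>}
     \<subseteq> {Z \<in> carrier ?T. tensor_can R C B (gC \<circ> lam \<circ> tau) gC Z = \<zero>\<^bsub>tensor_ring C B gC\<^esub>}"
  proof (rule subsetI)
    fix Z assume "Z \<in> {Z \<in> carrier ?T. tensor_can R A B (gC \<circ> lam \<circ> tau) (gC \<circ> lam) Z = \<zero>\<^bsub>tensor_ring A B (gC \<circ> lam)\<^esub>}"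
    then have ZT: "Z \<in> carrier ?T"
      and eq: "tensor_can R A B (gC \<circ> lam \<circ> tau) (gC \<circ> lam) Z = \<zero>\<^bsub>tensor_ring A B (gC \<circ> lam)\<^esub>"
      by blast+
    have eqA: "{v. \<exists>u\<in>Z. v \<in> a_r_coset (free_pair_ring B) ?KA u} = ?KA"
      using eq by (simp add: tensor_can_def tensor_ring_def FactRing_def)
    have uK: "u \<in> ?KC" if "u \<in> Z" for u
      using coset_self[of ?KA A B "gC \<circ> lam" u] that eqA sub by blast
    have "(\<lambda>_. 0) \<in> ?KA" using gen_zero unfolding tensor_ker_def by blast
    then obtain u0 where u0: "u0 \<in> Z" using eqA by blast
    have "{v. \<exists>u\<in>Z. v \<in> a_r_coset (free_pair_ring B) ?KC u} = ?KC"
    proof safe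
      fix v u assume "u \<in> Z" "v \<in> a_r_coset (free_pair_ring B) ?KC u"
      then obtain h where "h \<in> ?KC" "v = (\<lambda>p. h p + u p)"
        unfolding a_r_coset_def' by (auto simp: fpr_add)
      then show "v \<in> ?KC" using uK[OF \<open>u \<in> Z\<close>] gen_add unfolding tensor_ker_def by blast
    next
      fix x assume x: "x \<in> ?KC"
      have "(\<lambda>p. x p - u0 p) \<in> ?KC" using gen_diff x uK[OF u0] unfolding tensor_ker_def by blast
      moreover have "x = (\<lambda>p. x p - u0 p) \<oplus>\<^bsub>free_pair_ring B\<^esub> u0" by (simp add: fpr_add)
      ultimately have "x \<in> a_r_coset (free_pair_ring B) ?KC u0"
        unfolding a_r_coset_def' by blast
      then show "\<exists>u\<in>Z. x \<in> a_r_coset (free_pair_ring B) ?KC u" using u0 by blast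
    qed
    then have "tensor_can R C B (gC \<circ> lam \<circ> tau) gC Z = \<zero>\<^bsub>tensor_ring C B gC\<^esub>"
      by (simp add: tensor_can_def tensor_ring_def FactRing_def)
    with ZT show "Z \<in> {Z \<in> carrier ?T. tensor_can R C B (gC \<circ> lam \<circ> tau) gC Z = \<zero>\<^bsub>tensor_ring C B gC\<^esub>}"
      by blast
  qed
  show ?thesis
    unfolding lip_sat_def Let_def
    using int_closure_mono[OF KK, of ?T] by (auto simp: o_assoc)
qed

end
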